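(* Let $f,g\in\mathbb{H}$ be two linearly independent pure unit quaternions (so $f^2=g^2=-1$, $f\neq\pm g$). Let $h\in L^1(\mathbb{R}^2,\mathbb{H})$ and define $h_{\pm}(\mathbf{x})=\frac12\big(h(\mathbf{x})\pm f\,h(\mathbf{x})\,g\big)$. Define $$\mathcal{F}^{f,g}_{\pm}\{h\}(\boldsymbol{\omega})=\mathcal{F}^{f,g}\{h_{\pm}\}(\boldsymbol{\omega})=\int_{\mathbb{R}^2} e^{-f x_1\omega_1}\, h_{\pm}(\mathbf{x})\, e^{-g x_2\omega_2}\, d^2\mathbf{x},\qquad \boldsymbol{\omega}=(\omega_1,\omega_2)\in\mathbb{R}^2 .$$ Then $$\mathcal{F}^{f,g}_{\pm}\{h\}(\boldsymbol{\omega})=\int_{\mathbb{R}^2} h_{\pm}(\mathbf{x})\,e^{-g(x_2\omega_2\mp x_1\omega_1)}\,d^2\mathbf{x}=\int_{\mathbb{R}^2} e^{-f(x_1\omega_1\mp x_2\omega_2)}\,h_{\pm}(\mathbf{x})\,d^2\mathbf{x},$$ and $\mathcal{F}^{f,g}\{h\}=\mathcal{F}^{f,g}_{+}\{h\}+\mathcal{F}^{f,g}_{-}\{h\}$.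
   Context: $\mathbb{H}$ is the real quaternion algebra with units $i,j,k$, $i^2=j^2=k^2=ijk=-1$. A pure quaternion has zero scalar part; a pure unit quaternion $f$ satisfies $f^2=-1$. $\mathbf{x}=(x_1,x_2)\in\mathbb{R}^2$, $d^2\mathbf{x}=dx_1dx_2$, and for a pure unit quaternion $f$ and real $\alpha$, $e^{\alpha f}=\cos\alpha+f\sin\alpha$. *)

theory Defs
  imports "HOL-Analysis.Analysis"
begin

text \<open>Real quaternions H modelled as R^4 (components 1,2,3,4 = scalar, i, j, k parts),
  with the Hamilton product.  The vector-space structure, norm and integrals are those of R^4.\<close>

type_synonym quat = "real ^ 4"

definition qmul :: "quat \<Rightarrow> quat \<Rightarrow> quat" (infixl "\<odot>" 70) where
  "p \<odot> q = vector
     [ p$1 * q$1 - p$2 * q$2 - p$3 * q$3 - p$4 * q$4,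
       p$1 * q$2 + p$2 * q$1 + p$3 * q$4 - p$4 * q$3,
       p$1 * q$3 - p$2 * q$4 + p$3 * q$1 + p$4 * q$2,
       p$1 * q$4 + p$2 * q$3 - p$3 * q$2 + p$4 * q$1 ]"

definition qone :: quat where "qone = vector [1, 0, 0, 0]"

definition pure_quat :: "quat \<Rightarrow> bool" where "pure_quat q \<longleftrightarrow> q$1 = 0"

definition pure_unit_quat :: "quat \<Rightarrow> bool" where
  "pure_unit_quat q \<longleftrightarrow> pure_quat q \<and> norm q = 1"

definition qexp :: "quat \<Rightarrow> real \<Rightarrow> quat" where
  "qexp f a = cos a *\<^sub>R qone + sin a *\<^sub>R f"

definition qft :: "quat \<Rightarrow> quat \<Rightarrow> (real \<times> real \<Rightarrow> quat) \<Rightarrow> real \<times> real \<Rightarrow> quat" where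
  "qft f g h w = integral UNIV
     (\<lambda>x. qexp f (- (fst x * fst w)) \<odot> h x \<odot> qexp g (- (snd x * snd w)))"

definition hplus :: "quat \<Rightarrow> quat \<Rightarrow> (real \<times> real \<Rightarrow> quat) \<Rightarrow> real \<times> real \<Rightarrow> quat" where
  "hplus f g h x = (1/2) *\<^sub>R (h x + f \<odot> h x \<odot> g)"

definition hminus :: "quat \<Rightarrow> quat \<Rightarrow> (real \<times> real \<Rightarrow> quat) \<Rightarrow> real \<times> real \<Rightarrow> quat" where
  "hminus f g h x = (1/2) *\<^sub>R (h x - f \<odot> h x \<odot> g)"

end

theory Submission
  imports Defs
begin

lemma vector_4: "(vector[a,b,c,d] :: 'a::zero^4)$1 = a" "(vector[a,b,c,d] :: 'a::zero^4)$2 = b"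
  "(vector[a,b,c,d] :: 'a::zero^4)$3 = c" "(vector[a,b,c,d] :: 'a::zero^4)$4 = d"
  unfolding vector_def by simp_all

lemma qc: "(p \<odot> q)$1 = p$1 * q$1 - p$2 * q$2 - p$3 * q$3 - p$4 * q$4"
  "(p \<odot> q)$2 = p$1 * q$2 + p$2 * q$1 + p$3 * q$4 - p$4 * q$3"
  "(p \<odot> q)$3 = p$1 * q$3 - p$2 * q$4 + p$3 * q$1 + p$4 * q$2"
  "(p \<odot> q)$4 = p$1 * q$4 + p$2 * q$3 - p$3 * q$2 + p$4 * q$1"
  by (simp_all add: qmul_def vector_4)

lemma qone_c: "qone$1 = 1" "qone$2 = 0" "qone$3 = 0" "qone$4 = 0"
  by (simp_all add: qone_def vector_4)

lemma qeq: "(p::quat) = q \<longleftrightarrow> p$1 = q$1 \<and> p$2 = q$2 \<and> p$3 = q$3 \<and> p$4 = q$4"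
  by (simp add: vec_eq_iff forall_4)

lemma qmul_assoc: "(p \<odot> q) \<odot> r = p \<odot> (q \<odot> r)"
  by (simp add: qeq qc algebra_simps)

lemma qmul_add_left: "(p + q) \<odot> r = p \<odot> r + q \<odot> r"
  by (simp add: qeq qc algebra_simps)
lemma qmul_add_right: "r \<odot> (p + q) = r \<odot> p + r \<odot> q"
  by (simp add: qeq qc algebra_simps)
lemma qmul_diff_left: "(p - q) \<odot> r = p \<odot> r - q \<odot> r"
  by (simp add: qeq qc algebra_simps)
lemma qmul_diff_right: "r \<odot> (p - q) = r \<odot> p - r \<odot> q"
  by (simp add: qeq qc algebra_simps)
lemma qmul_scale_left: "(c *\<^sub>R p) \<odot> r = c *\<^sub>R (p \<odot> r)"
  by (simp add: qeq qc algebra_simps)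
lemma qmul_scale_right: "r \<odot> (c *\<^sub>R p) = c *\<^sub>R (r \<odot> p)"
  by (simp add: qeq qc algebra_simps)
lemma qmul_neg_left: "(- p) \<odot> r = - (p \<odot> r)"
  by (simp add: qeq qc algebra_simps)
lemma qmul_neg_right: "r \<odot> (- p) = - (r \<odot> p)"
  by (simp add: qeq qc algebra_simps)
lemma qmul_one_left: "qone \<odot> r = r"
  by (simp add: qeq qc qone_c)
lemma qmul_one_right: "r \<odot> qone = r"
  by (simp add: qeq qc qone_c)

lemma pure_sq: assumes "pure_unit_quat f" shows "f \<odot> f = - qone"
proof -
  have "f \<bullet> f = 1" using assms by (simp add: pure_unit_quat_def dot_square_norm)
  hence n: "f$1 * f$1 + f$2 * f$2 + f$3 * f$3 + f$4 * f$4 = 1"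
    by (simp add: inner_vec_def sum_4)
  have z: "f$1 = 0" using assms by (simp add: pure_unit_quat_def pure_quat_def)
  have "(f \<odot> f)$1 = -1" using n z by (simp add: qc)
  moreover have "(f \<odot> f)$2 = 0" "(f \<odot> f)$3 = 0" "(f \<odot> f)$4 = 0"
    using z by (simp_all add: qc mult.commute)
  ultimately show ?thesis by (simp add: qeq qone_c)
qed

lemma bilin: "bilinear qmul"
  unfolding bilinear_def linear_iff
  by (simp add: qmul_add_left qmul_add_right qmul_scale_left qmul_scale_right)

lemma bilin2: "bilinear (\<lambda>b y. y \<odot> b)"
  unfolding bilinear_def linear_iff
  by (simp add: qmul_add_left qmul_add_right qmul_scale_left qmul_scale_right)

lemma qexp_mult: assumes "pure_unit_quat g"
  shows "qexp g a \<odot> qexp g b = qexp g (a + b)"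
  using pure_sq[OF assms]
  by (simp add: qexp_def qmul_add_left qmul_add_right qmul_scale_left qmul_scale_right
      qmul_one_left qmul_one_right cos_add sin_add algebra_simps)

lemma exp_swap_plus:
  assumes "f \<odot> p = - (p \<odot> g)"
  shows "qexp f (- a) \<odot> p = p \<odot> qexp g a"
  unfolding qexp_def
  by (simp add: qmul_add_left qmul_add_right qmul_scale_left qmul_scale_right
      qmul_one_left qmul_one_right qmul_diff_left qmul_diff_right assms)

lemma exp_swap_minus:
  assumes "f \<odot> p = p \<odot> g"
  shows "qexp f (- a) \<odot> p = p \<odot> qexp g (- a)"
  unfolding qexp_def
  by (simp add: qmul_add_left qmul_add_right qmul_scale_left qmul_scale_right
      qmul_one_left qmul_one_right qmul_diff_left qmul_diff_right assms)

lemma plus_rel: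
  assumes f: "pure_unit_quat f" and g: "pure_unit_quat g"
  shows "f \<odot> ((1/2) *\<^sub>R (q + f \<odot> q \<odot> g)) = - (((1/2) *\<^sub>R (q + f \<odot> q \<odot> g)) \<odot> g)"
proof -
  have 1: "f \<odot> (f \<odot> q \<odot> g) = - (q \<odot> g)"
    by (simp add: qmul_assoc[symmetric] pure_sq[OF f] qmul_neg_left qmul_one_left)
  have 2: "f \<odot> q \<odot> g \<odot> g = - (f \<odot> q)"
    by (simp add: qmul_assoc pure_sq[OF g] qmul_neg_right qmul_one_right)
  show ?thesis
    apply (simp add: qmul_add_left qmul_add_right qmul_scale_left qmul_scale_right 1 2)
    apply (simp add: algebra_simps)
    done
qed

lemma minus_rel:
  assumes f: "pure_unit_quat f" and g: "pure_unit_quat g"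
  shows "f \<odot> ((1/2) *\<^sub>R (q - f \<odot> q \<odot> g)) = ((1/2) *\<^sub>R (q - f \<odot> q \<odot> g)) \<odot> g"
proof -
  have 1: "f \<odot> (f \<odot> q \<odot> g) = - (q \<odot> g)"
    by (simp add: qmul_assoc[symmetric] pure_sq[OF f] qmul_neg_left qmul_one_left)
  have 2: "f \<odot> q \<odot> g \<odot> g = - (f \<odot> q)"
    by (simp add: qmul_assoc pure_sq[OF g] qmul_neg_right qmul_one_right)
  show ?thesis
    by (simp add: qmul_diff_left qmul_diff_right qmul_scale_left qmul_scale_right 1 2)
qed


lemma bnd_exp: "bounded (range (\<lambda>x. qexp f (t x)))"
  unfolding bounded_iff
proof (intro exI ballI)
  fix y assume "y \<in> range (\<lambda>x. qexp f (t x))"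
  then obtain x where y: "y = qexp f (t x)" by auto
  have "norm y \<le> norm (cos (t x) *\<^sub>R qone) + norm (sin (t x) *\<^sub>R f)"
    unfolding y qexp_def by (rule norm_triangle_ineq)
  also have "\<dots> \<le> norm qone + norm f"
    by (intro add_mono) (simp_all add: mult_left_le_one_le)
  finally show "norm y \<le> norm qone + norm f" .
qed

lemma meas_exp:
  assumes "continuous_on UNIV t"
  shows "(\<lambda>x. qexp f (t x)) \<in> borel_measurable (lebesgue_on UNIV)"
  unfolding qexp_def
  by (intro continuous_imp_measurable_on_sets_lebesgue continuous_intros assms) auto

lemma integ:
  fixes p :: "real \<times> real \<Rightarrow> quat"
  assumes "p absolutely_integrable_on UNIV"
  shows "(\<lambda>x. qexp f (- (fst x * fst w)) \<odot> p x \<odot> qexp g (- (snd x * snd w))) integrable_on UNIV"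
proof -
  have c1: "continuous_on UNIV (\<lambda>x::real\<times>real. - (fst x * fst w))"
    by (intro continuous_intros)
  have c2: "continuous_on UNIV (\<lambda>x::real\<times>real. - (snd x * snd w))"
    by (intro continuous_intros)
  have U: "(UNIV::(real\<times>real) set) \<in> sets lebesgue" by simp
  have A: "(\<lambda>x. qexp f (- (fst x * fst w)) \<odot> p x) absolutely_integrable_on UNIV"
    using absolutely_integrable_bounded_measurable_product[OF bilin meas_exp[OF c1, of f] U
      bnd_exp[of f "\<lambda>x. - (fst x * fst w)"] assms] .
  have "(\<lambda>x. (\<lambda>b y. y \<odot> b) (qexp g (- (snd x * snd w))) (qexp f (- (fst x * fst w)) \<odot> p x))
        absolutely_integrable_on UNIV"
    using absolutely_integrable_bounded_measurable_product[OF bilin2 meas_exp[OF c2, of g] U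
      bnd_exp[of g "\<lambda>x. - (snd x * snd w)"] A] .
  then have "(\<lambda>x. qexp f (- (fst x * fst w)) \<odot> p x \<odot> qexp g (- (snd x * snd w))) absolutely_integrable_on UNIV"
    by (simp only:)
  then show ?thesis using absolutely_integrable_on_def by blast
qed

lemma hint:
  fixes h :: "real \<times> real \<Rightarrow> quat"
  assumes "h absolutely_integrable_on UNIV"
  shows "(\<lambda>x. f \<odot> h x \<odot> g) absolutely_integrable_on UNIV"
proof -
  have U: "(UNIV::(real\<times>real) set) \<in> sets lebesgue" by simp
  have m1: "(\<lambda>x::real\<times>real. f) \<in> borel_measurable (lebesgue_on UNIV)" by (rule borel_measurable_const)
  have m2: "(\<lambda>x::real\<times>real. g) \<in> borel_measurable (lebesgue_on UNIV)" by (rule borel_measurable_const)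
  have b1: "bounded ((\<lambda>x::real\<times>real. f) ` UNIV)" by (simp add: image_constant_conv)
  have b2: "bounded ((\<lambda>x::real\<times>real. g) ` UNIV)" by (simp add: image_constant_conv)
  have A: "(\<lambda>x. (\<lambda>_. f) x \<odot> h x) absolutely_integrable_on UNIV"
    using absolutely_integrable_bounded_measurable_product[OF bilin m1 U b1 assms] .
  have "(\<lambda>x. (\<lambda>b y. y \<odot> b) ((\<lambda>_. g) x) ((\<lambda>_. f) x \<odot> h x)) absolutely_integrable_on UNIV"
    using absolutely_integrable_bounded_measurable_product[OF bilin2 m2 U b2 A] .
  then show ?thesis by (simp only:)
qed

theorem theorem2:
  fixes f g :: quat and h :: "real \<times> real \<Rightarrow> quat" and w :: "real \<times> real"
  assumes "pure_unit_quat f" and "pure_unit_quat g"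
    and "independent {f, g}" and "f \<noteq> g"
    and "h absolutely_integrable_on UNIV"
  shows "qft f g (hplus f g h) w
           = integral UNIV (\<lambda>x. hplus f g h x \<odot> qexp g (- (snd x * snd w - fst x * fst w)))
       \<and> qft f g (hplus f g h) w
           = integral UNIV (\<lambda>x. qexp f (- (fst x * fst w - snd x * snd w)) \<odot> hplus f g h x)
       \<and> qft f g (hminus f g h) w
           = integral UNIV (\<lambda>x. hminus f g h x \<odot> qexp g (- (snd x * snd w + fst x * fst w)))
       \<and> qft f g (hminus f g h) w
           = integral UNIV (\<lambda>x. qexp f (- (fst x * fst w + snd x * snd w)) \<odot> hminus f g h x)
       \<and> qft f g h w = qft f g (hplus f g h) w + qft f g (hminus f g h) w"
proof -
  note F = assms(1) and G = assms(2)
  have P: "f \<odot> hplus f g h x = - (hplus f g h x \<odot> g)" for x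
    unfolding hplus_def by (rule plus_rel[OF F G])
  have M: "f \<odot> hminus f g h x = hminus f g h x \<odot> g" for x
    unfolding hminus_def by (rule minus_rel[OF F G])
  have e1: "qexp f (- a) \<odot> hplus f g h x \<odot> qexp g (- b) = hplus f g h x \<odot> qexp g (- (b - a))" for a b x
    by (simp add: exp_swap_plus[OF P] qmul_assoc qexp_mult[OF G])
  have e2: "qexp f (- (a - b)) \<odot> hplus f g h x = hplus f g h x \<odot> qexp g (- (b - a))" for a b x
    using exp_swap_plus[OF P, of "a - b" x] by simp
  have e3: "qexp f (- a) \<odot> hminus f g h x \<odot> qexp g (- b) = hminus f g h x \<odot> qexp g (- (b + a))" for a b x
    by (simp add: exp_swap_minus[OF M] qmul_assoc qexp_mult[OF G] add.commute)
  have e4: "qexp f (- (a + b)) \<odot> hminus f g h x = hminus f g h x \<odot> qexp g (- (b + a))" for a b x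
    using exp_swap_minus[OF M, of "a + b" x] by (simp add: add.commute)
  have s: "h x = hplus f g h x + hminus f g h x" for x
    unfolding hplus_def hminus_def by (simp add: algebra_simps scaleR_2[symmetric])
  have hp: "hplus f g h absolutely_integrable_on UNIV"
    unfolding hplus_def
    by (intro absolutely_integrable_scaleR_left set_integral_add assms(5) hint)
  have hm: "hminus f g h absolutely_integrable_on UNIV"
    unfolding hminus_def
    by (intro absolutely_integrable_scaleR_left set_integral_diff(1) assms(5) hint)
  have last: "qft f g h w = qft f g (hplus f g h) w + qft f g (hminus f g h) w"
    unfolding qft_def
    apply (subst integral_add[symmetric])
      apply (rule integ[OF hp])
     apply (rule integ[OF hm])
    apply (subst s)
    apply (simp add: qmul_add_left qmul_add_right)
    done
  have i1: "(\<lambda>x. qexp f (- (fst x * fst w)) \<odot> hplus f g h x \<odot> qexp g (- (snd x * snd w)))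
     = (\<lambda>x. hplus f g h x \<odot> qexp g (- (snd x * snd w - fst x * fst w)))"
    by (rule ext) (rule e1)
  have i2: "(\<lambda>x. qexp f (- (fst x * fst w - snd x * snd w)) \<odot> hplus f g h x)
     = (\<lambda>x. hplus f g h x \<odot> qexp g (- (snd x * snd w - fst x * fst w)))"
    by (rule ext) (rule e2)
  have i3: "(\<lambda>x. qexp f (- (fst x * fst w)) \<odot> hminus f g h x \<odot> qexp g (- (snd x * snd w)))
     = (\<lambda>x. hminus f g h x \<odot> qexp g (- (snd x * snd w + fst x * fst w)))"
    by (rule ext) (rule e3)
  have i4: "(\<lambda>x. qexp f (- (fst x * fst w + snd x * snd w)) \<odot> hminus f g h x)
     = (\<lambda>x. hminus f g h x \<odot> qexp g (- (snd x * snd w + fst x * fst w)))"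
    by (rule ext) (rule e4)
  show ?thesis
    unfolding qft_def i1 i2 i3 i4
    using last unfolding qft_def i1 i3
    by (intro conjI refl)
qed

end
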